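(* Let $n\ge1$, $1\le k\le n$, and consider a U(1)-invariant Hamiltonian on $n$ qubits of the form $$H(t)=H_{(k-1)}(t)+\sum_{j_1<\cdots<j_k} a^{(k)}_{j_1\cdots j_k}(t)\,Z_{j_1}Z_{j_2}\cdots Z_{j_k},\qquad 0\le t\le T,$$ where $H_{(k-1)}(t)$ is, at every time, a U(1)-invariant Hermitian operator that is $(k-1)$-local, and the $a^{(k)}_{j_1\cdots j_k}(t)$ are real piecewise-continuous functions. Then $$\beta_k=-2^k\int_0^T\sum_{j_1<\cdots<j_k}a^{(k)}_{j_1\cdots j_k}(t)\,dt\pmod{2\pi}.$$
   Context: Qubits $1,\dots,n$, Hilbert space $(\mathbb{C}^2)^{\otimes n}$, $Z_j$ the Pauli $Z$ on qubit $j$. An operator is $k$-local if it is a sum of terms each acting non-trivially on at most $k$ qubits. For $m=0,\dots,n$, $\Pi_m$ is the projector onto the span of computational basis states with exactly $m$ qubits in state $|1\rangle$. A Hamiltonian is U(1)-invariant if it commutes with $\sum_j Z_j$. For such $H(t)$, $V=\mathcal{T}\exp(-i\int_0^TH(t)dt)$ (time-ordered exponential) satisfies $V=\bigoplus_m V_m$ with $V_m$ the restriction of $V$ to the range of $\Pi_m$; $\theta_m=\arg\det(V_m)\in(-\pi,\pi]$. Define $$\beta_k=\sum_{m=0}^k(-1)^m\binom{n-m}{k-m}\theta_m\pmod{2\pi}.$$ *)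

theory Defs
  imports "HOL-Analysis.Analysis" "Jordan_Normal_Form.Determinant" "Jordan_Normal_Form.DL_Submatrix"
begin

text \<open>Qubits are indexed 0,...,n-1. The computational basis state with index x < 2^n
  has qubit j in state |1> iff bit x j. Operators are 2^n x 2^n complex matrices.\<close>

definition dimH :: "nat \<Rightarrow> nat" where
  "dimH n = 2 ^ n"

definition popcount :: "nat \<Rightarrow> nat \<Rightarrow> nat" where
  "popcount n x = card {j. j < n \<and> bit x j}"

definition Zop :: "nat \<Rightarrow> nat \<Rightarrow> complex mat" where
  "Zop n j = mat (dimH n) (dimH n)
     (\<lambda>(x,y). if x = y then (if bit x j then -1 else 1) else 0)"

definition Zprod :: "nat \<Rightarrow> nat set \<Rightarrow> complex mat" where
  "Zprod n S = mat (dimH n) (dimH n)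
     (\<lambda>(x,y). if x = y then (\<Prod>j\<in>S. if bit x j then -1 else 1) else 0)"

definition Ztot :: "nat \<Rightarrow> complex mat" where
  "Ztot n = mat (dimH n) (dimH n) (\<lambda>(x,y). \<Sum>j<n. Zop n j $$ (x,y))"

definition U1_invariant :: "nat \<Rightarrow> complex mat \<Rightarrow> bool" where
  "U1_invariant n A \<longleftrightarrow> A * Ztot n = Ztot n * A"

definition hermitian_op :: "nat \<Rightarrow> complex mat \<Rightarrow> bool" where
  "hermitian_op n A \<longleftrightarrow> A \<in> carrier_mat (dimH n) (dimH n) \<and>
     (\<forall>x < dimH n. \<forall>y < dimH n. A $$ (x,y) = cnj (A $$ (y,x)))"

text \<open>A acts non-trivially only on the qubits in S, i.e. A = B \<otimes> Id on the complement of S.\<close>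
definition acts_on :: "nat \<Rightarrow> nat set \<Rightarrow> complex mat \<Rightarrow> bool" where
  "acts_on n S A \<longleftrightarrow> S \<subseteq> {..<n} \<and> A \<in> carrier_mat (dimH n) (dimH n) \<and>
     (\<forall>x < dimH n. \<forall>y < dimH n.
        (\<exists>j<n. j \<notin> S \<and> bit x j \<noteq> bit y j) \<longrightarrow> A $$ (x,y) = 0) \<and>
     (\<forall>x < dimH n. \<forall>y < dimH n. \<forall>x' < dimH n. \<forall>y' < dimH n.
        (\<forall>j<n. j \<notin> S \<longrightarrow> bit x j = bit y j) \<longrightarrow>
        (\<forall>j<n. j \<notin> S \<longrightarrow> bit x' j = bit y' j) \<longrightarrow>
        (\<forall>j\<in>S. bit x j = bit x' j \<and> bit y j = bit y' j) \<longrightarrow>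
        A $$ (x,y) = A $$ (x',y'))"

definition k_local :: "nat \<Rightarrow> nat \<Rightarrow> complex mat \<Rightarrow> bool" where
  "k_local n k A \<longleftrightarrow> A \<in> carrier_mat (dimH n) (dimH n) \<and>
     (\<exists>ts :: (nat set \<times> complex mat) list.
        (\<forall>(S,B) \<in> set ts. card S \<le> k \<and> acts_on n S B) \<and>
        (\<forall>x < dimH n. \<forall>y < dimH n. A $$ (x,y) = (\<Sum>p \<leftarrow> ts. snd p $$ (x,y))))"

definition piecewise_cont :: "real \<Rightarrow> (real \<Rightarrow> 'a::real_normed_vector) \<Rightarrow> bool" where
  "piecewise_cont T f \<longleftrightarrow>
     (\<exists>D. finite D \<and> continuous_on ({0..T} - D) f) \<and>
     (\<forall>t\<in>{0..T}. (0 < t \<longrightarrow> (\<exists>l. (f \<longlongrightarrow> l) (at_left t))) \<and>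
                  (t < T \<longrightarrow> (\<exists>l. (f \<longlongrightarrow> l) (at_right t))))"

text \<open>V is the time-ordered exponential of -i H on [0,T]: it solves the Dyson integral
  equation V(t) = I - i \<integral>_0^t H(s) V(s) ds, written entrywise.\<close>
definition time_ordered_exp :: "nat \<Rightarrow> real \<Rightarrow> (real \<Rightarrow> complex mat) \<Rightarrow> (real \<Rightarrow> complex mat) \<Rightarrow> bool" where
  "time_ordered_exp n T H V \<longleftrightarrow>
     (\<forall>t\<in>{0..T}. V t \<in> carrier_mat (dimH n) (dimH n) \<and>
        (\<forall>x < dimH n. \<forall>y < dimH n.
           ((\<lambda>s. - \<i> * (H s * V s) $$ (x,y)) has_integral
              (V t $$ (x,y) - 1\<^sub>m (dimH n) $$ (x,y))) {0..t}))"

definition weight_space :: "nat \<Rightarrow> nat \<Rightarrow> nat set" where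
  "weight_space n m = {x. x < dimH n \<and> popcount n x = m}"

text \<open>theta_m = arg det (V restricted to the range of Pi_m), in (-pi, pi].\<close>
definition theta :: "nat \<Rightarrow> complex mat \<Rightarrow> nat \<Rightarrow> real" where
  "theta n V m = Arg (det (submatrix V (weight_space n m) (weight_space n m)))"

text \<open>beta_k, as a real representative (congruence mod 2 pi is stated separately).\<close>
definition beta :: "nat \<Rightarrow> complex mat \<Rightarrow> nat \<Rightarrow> real" where
  "beta n V k = (\<Sum>m\<le>k. (-1) ^ m * real ((n - m) choose (k - m)) * theta n V m)"

definition cong_2pi :: "real \<Rightarrow> real \<Rightarrow> bool" where
  "cong_2pi a b \<longleftrightarrow> (\<exists>z::int. a - b = 2 * pi * of_int z)"

end

theory Submission
  imports Defs
begin


lemma pc_int0: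
  fixes f :: "real \<Rightarrow> 'a::banach"
  assumes ab: "a < b" and c: "continuous_on {a<..<b} f"
    and la: "(f \<longlongrightarrow> la) (at_right a)" and lb: "(f \<longlongrightarrow> lb) (at_left b)"
  shows "f integrable_on {a..b}"
proof -
  define g where "g t = (if t = a then la else if t = b then lb else f t)" for t
  have ev1: "eventually (\<lambda>t. t \<in> {a<..<b}) (at_right a)"
    using ab by (simp add: eventually_at_right_field) (metis)
  have ev2: "eventually (\<lambda>t. t \<in> {a<..<b}) (at_left b)"
    using ab by (simp add: eventually_at_left_field) (metis)
  have "continuous_on {a..b} g"
  proof (rule continuous_on_IccI)
    have "eventually (\<lambda>t. f t = g t) (at_right a)"
      using ev1 by eventually_elim (auto simp: g_def)
    then show "(g \<longlongrightarrow> g a) (at_right a)" using la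
      by (simp add: Lim_transform_eventually g_def[of a])
    have "eventually (\<lambda>t. f t = g t) (at_left b)"
      using ev2 by eventually_elim (auto simp: g_def)
    then show "(g \<longlongrightarrow> g b) (at_left b)" using lb ab
      by (simp add: Lim_transform_eventually g_def[of b])
    fix x assume x: "a < x" "x < b"
    have "isCont f x" using c x continuous_on_eq_continuous_at[of "{a<..<b}" f] by auto
    moreover have "eventually (\<lambda>t. t \<in> {a<..<b}) (at x)"
      using x by (intro eventually_at_in_open') auto
    then have "eventually (\<lambda>t. f t = g t) (at x)"
      by eventually_elim (auto simp: g_def)
    ultimately show "(g \<longlongrightarrow> g x) (at x)" using x
      by (simp add: isCont_def Lim_transform_eventually g_def[of x])
  qed (fact ab)
  then have gi: "g integrable_on {a..b}" by (rule integrable_continuous_interval)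
  show ?thesis
    by (rule integrable_spike_finite[where S="{a,b}" and f=g]) (auto simp: g_def gi)
qed

lemma pc_int_aux:
  fixes f :: "real \<Rightarrow> 'a::banach"
  assumes "finite D"
  shows "\<forall>a b. a \<le> b \<longrightarrow> continuous_on ({a<..<b} - D) f \<longrightarrow>
     (\<forall>t\<in>{a..b}. (a < t \<longrightarrow> (\<exists>l. (f \<longlongrightarrow> l) (at_left t))) \<and>
                  (t < b \<longrightarrow> (\<exists>l. (f \<longlongrightarrow> l) (at_right t)))) \<longrightarrow> f integrable_on {a..b}"
  using assms
proof (induction D)
  case empty
  show ?case
  proof (intro allI impI)
    fix a b :: real assume ab: "a \<le> b" and c: "continuous_on ({a<..<b} - {}) f"
      and l: "\<forall>t\<in>{a..b}. (a < t \<longrightarrow> (\<exists>l. (f \<longlongrightarrow> l) (at_left t))) \<and>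
                  (t < b \<longrightarrow> (\<exists>l. (f \<longlongrightarrow> l) (at_right t)))"
    show "f integrable_on {a..b}"
    proof (cases "a = b")
      case True then show ?thesis by (metis integrable_on_refl interval_cbox)
    next
      case False
      with ab have ab: "a < b" by simp
      from l ab obtain la where "(f \<longlongrightarrow> la) (at_right a)" by auto
      moreover from l ab obtain lb where "(f \<longlongrightarrow> lb) (at_left b)" by auto
      ultimately show ?thesis using pc_int0[OF ab] c by auto
    qed
  qed
next
  case (insert d D)
  show ?case
  proof (intro allI impI)
    fix a b :: real assume ab: "a \<le> b" and c: "continuous_on ({a<..<b} - insert d D) f"
      and l: "\<forall>t\<in>{a..b}. (a < t \<longrightarrow> (\<exists>l. (f \<longlongrightarrow> l) (at_left t))) \<and>
                  (t < b \<longrightarrow> (\<exists>l. (f \<longlongrightarrow> l) (at_right t)))"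
    show "f integrable_on {a..b}"
    proof (cases "d \<in> {a<..<b}")
      case True
      have "f integrable_on {a..d}"
      proof (rule insert.IH[rule_format])
        show "continuous_on ({a<..<d} - D) f" by (rule continuous_on_subset[OF c]) (use True in auto)
      qed (use True l in auto)
      moreover have "f integrable_on {d..b}"
      proof (rule insert.IH[rule_format])
        show "continuous_on ({d<..<b} - D) f" by (rule continuous_on_subset[OF c]) (use True in auto)
      qed (use True l in auto)
      ultimately show ?thesis using True Henstock_Kurzweil_Integration.integrable_combine[where a=a and c=d and b=b and f=f] by auto
    next
      case False
      then have "{a<..<b} - insert d D = {a<..<b} - D" by auto
      then show ?thesis using insert.IH ab c l by auto
    qed
  qed
qed

lemma pc_integrable:
  fixes f :: "real \<Rightarrow> 'a::banach"
  assumes "piecewise_cont T f" "0 \<le> t" "t \<le> T"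
  shows "f integrable_on {0..t}"
proof -
  from assms(1) obtain D where D: "finite D" "continuous_on ({0..T} - D) f"
    unfolding piecewise_cont_def by blast
  have l: "\<forall>t\<in>{0..T}. (0 < t \<longrightarrow> (\<exists>l. (f \<longlongrightarrow> l) (at_left t))) \<and>
                  (t < T \<longrightarrow> (\<exists>l. (f \<longlongrightarrow> l) (at_right t)))"
    using assms(1) unfolding piecewise_cont_def by blast
  have "f integrable_on {0..T}"
  proof (rule pc_int_aux[OF D(1), rule_format])
    show "continuous_on ({0<..<T} - D) f" by (rule continuous_on_subset[OF D(2)]) auto
  qed (use l assms in auto)
  then show ?thesis using assms integrable_on_subinterval by fastforce
qed




lemma det_leib:
  "det (mat d d (\<lambda>(i,j). X i j)) =
     (\<Sum>p\<in>{p. p permutes {..<d}}. signof p * (\<Prod>i<d. X i (p i)))"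
proof -
  have "det (mat d d (\<lambda>(i,j). X i j)) =
     (\<Sum>p\<in>{p. p permutes {0..<d}}. signof p * (\<Prod>i=0..<d. mat d d (\<lambda>(i,j). X i j) $$ (i, p i)))"
    by (rule det_def') simp
  also have "\<dots> = (\<Sum>p\<in>{p. p permutes {..<d}}. signof p * (\<Prod>i<d. X i (p i)))"
  proof (rule sum.cong)
    show "{p. p permutes {0..<d}} = {p. p permutes {..<d}}" by (simp add: atLeast0LessThan)
  next
    fix p assume "p \<in> {p. p permutes {..<d}}"
    then have p: "p permutes {..<d}" by simp
    have "\<And>i. i < d \<Longrightarrow> p i < d" using permutes_in_image[OF p] by auto
    then show "signof p * (\<Prod>i=0..<d. mat d d (\<lambda>(i,j). X i j) $$ (i, p i)) = signof p * (\<Prod>i<d. X i (p i))"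
      by (auto simp: atLeast0LessThan intro!: prod.cong)
  qed
  finally show ?thesis .
qed

lemma det_row_repl:
  fixes X :: "nat \<Rightarrow> nat \<Rightarrow> 'a::comm_ring_1"
  assumes i: "i < d" and l: "l < d"
  shows "det (mat d d (\<lambda>(r,c). if r = i then X l c else X r c)) =
           (if l = i then det (mat d d (\<lambda>(r,c). X r c)) else 0)"
proof (cases "l = i")
  case True
  have "(\<lambda>(r,c). if r = i then X l c else X r c) = (\<lambda>(r,c). X r c)"
    using True by (auto simp: fun_eq_iff)
  then show ?thesis using True by simp
next
  case False
  have "det (mat d d (\<lambda>(r,c). if r = i then X l c else X r c)) = 0"
  proof (rule det_identical_rows[of _ d i l])
    show "row (mat d d (\<lambda>(r,c). if r = i then X l c else X r c)) i =
          row (mat d d (\<lambda>(r,c). if r = i then X l c else X r c)) l"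
      using i l False by (auto intro!: eq_vecI)
  qed (use i l False in auto)
  then show ?thesis using False by simp
qed

lemma det_row_expand:
  fixes X :: "nat \<Rightarrow> nat \<Rightarrow> 'a::comm_ring_1"
  assumes i: "i < d"
  shows "(\<Sum>p\<in>{p. p permutes {..<d}}. signof p * (Y (p i) * (\<Prod>j\<in>{..<d}-{i}. X j (p j))))
     = det (mat d d (\<lambda>(r,c). if r = i then Y c else X r c))"
proof -
  have "det (mat d d (\<lambda>(r,c). if r = i then Y c else X r c)) =
     (\<Sum>p\<in>{p. p permutes {..<d}}. signof p * (\<Prod>r<d. (if r = i then Y (p r) else X r (p r))))"
    unfolding det_leib by (simp add: if_distrib)
  also have "\<dots> = (\<Sum>p\<in>{p. p permutes {..<d}}. signof p * (Y (p i) * (\<Prod>j\<in>{..<d}-{i}. X j (p j))))"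
  proof (rule sum.cong[OF refl])
    fix p
    have "(\<Prod>r<d. (if r = i then Y (p r) else X r (p r))) =
          (if i = i then Y (p i) else X i (p i)) * (\<Prod>r\<in>{..<d}-{i}. (if r = i then Y (p r) else X r (p r)))"
      using i by (subst prod.remove[of _ i]) auto
    also have "\<dots> = Y (p i) * (\<Prod>j\<in>{..<d}-{i}. X j (p j))"
      by (auto intro!: prod.cong)
    finally show "signof p * (\<Prod>r<d. (if r = i then Y (p r) else X r (p r))) =
          signof p * (Y (p i) * (\<Prod>j\<in>{..<d}-{i}. X j (p j)))" by simp
  qed
  finally show ?thesis by simp
qed

lemma det_row_lin:
  fixes X :: "nat \<Rightarrow> nat \<Rightarrow> 'a::comm_ring_1"
  assumes i: "i < d"
  shows "det (mat d d (\<lambda>(r,c). if r = i then (\<Sum>l<d. B l * X l c) else X r c))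
        = B i * det (mat d d (\<lambda>(r,c). X r c))"
proof -
  let ?Pm = "{p. p permutes {..<d}}"
  have "det (mat d d (\<lambda>(r,c). if r = i then (\<Sum>l<d. B l * X l c) else X r c))
     = (\<Sum>p\<in>?Pm. signof p * ((\<Sum>l<d. B l * X l (p i)) * (\<Prod>j\<in>{..<d}-{i}. X j (p j))))"
    using det_row_expand[OF i, of "\<lambda>c. \<Sum>l<d. B l * X l c" X] by simp
  also have "\<dots> = (\<Sum>l<d. B l * (\<Sum>p\<in>?Pm. signof p * (X l (p i) * (\<Prod>j\<in>{..<d}-{i}. X j (p j)))))"
    by (simp add: sum_distrib_left sum_distrib_right sum.swap[of _ ?Pm] mult_ac)
  also have "\<dots> = (\<Sum>l<d. B l * det (mat d d (\<lambda>(r,c). if r = i then X l c else X r c)))"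
    by (simp add: det_row_expand[OF i])
  also have "\<dots> = (\<Sum>l<d. B l * (if l = i then det (mat d d (\<lambda>(r,c). X r c)) else 0))"
    by (intro sum.cong refl) (simp add: det_row_repl[OF i])
  also have "\<dots> = B i * det (mat d d (\<lambda>(r,c). X r c))"
    using i by (simp add: if_distrib sum.delta cong: if_cong)
  finally show ?thesis .
qed




lemma liouville:
  fixes A W :: "real \<Rightarrow> nat \<Rightarrow> nat \<Rightarrow> complex" and T :: real and D :: "real set"
  assumes T: "0 \<le> T" and D: "finite D"
    and eq: "\<And>i j t. i<d \<Longrightarrow> j<d \<Longrightarrow> t\<in>{0..T} \<Longrightarrow>
      ((\<lambda>s. \<Sum>l<d. A s i l * W s l j) has_integral (W t i j - (if i = j then 1 else 0))) {0..t}"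
    and contA: "\<And>i j. i<d \<Longrightarrow> j<d \<Longrightarrow> continuous_on ({0..T} - D) (\<lambda>s. A s i j)"
    and intA: "(\<lambda>s. \<Sum>i<d. A s i i) integrable_on {0..T}"
  shows "det (mat d d (\<lambda>(i,j). W T i j)) = exp (integral {0..T} (\<lambda>s. \<Sum>i<d. A s i i))"
proof -
  define F where "F i j s = (\<Sum>l<d. A s i l * W s l j)" for i j s
  define U where "U = {0<..<T} - D"
  have openU: "open U" unfolding U_def using D by (intro open_Diff finite_imp_closed) auto
  have Fint: "F i j integrable_on {0..T}" if "i<d" "j<d" for i j
    using eq[of i j T] T that unfolding F_def[abs_def] integrable_on_def by auto
  have Wrep: "W t i j = (if i=j then 1 else 0) + integral {0..t} (F i j)" if "i<d" "j<d" "t\<in>{0..T}" for i j t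
    using integral_unique[OF eq[OF that]] unfolding F_def[abs_def] by (auto simp: algebra_simps)
  have contW: "continuous_on {0..T} (\<lambda>t. W t i j)" if "i<d" "j<d" for i j
  proof -
    have "continuous_on {0..T} (\<lambda>t. (if i=j then 1 else 0) + integral {0..t} (F i j))"
      by (intro continuous_intros indefinite_integral_continuous_1 Fint that)
    then show ?thesis by (rule continuous_on_eq) (use Wrep that in auto)
  qed
  have isA: "isCont (\<lambda>s. A s i j) t" if "t\<in>U" "i<d" "j<d" for t i j
  proof -
    have "continuous_on U (\<lambda>s. A s i j)"
      by (rule continuous_on_subset[OF contA[OF that(2,3)]]) (auto simp: U_def)
    then show ?thesis using openU that(1) continuous_on_eq_continuous_at by blast
  qed
  have isW: "isCont (\<lambda>s. W s i j) t" if "t\<in>U" "i<d" "j<d" for t i j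
    using continuous_on_interior[OF contW[OF that(2,3)]] that(1) by (auto simp: U_def)
  have isF: "isCont (F i j) t" if "t\<in>U" "i<d" "j<d" for t i j
    unfolding F_def using that isA isW by (intro isCont_sum ballI continuous_intros) auto
  have tU: "0 < t" "t < T" "t \<notin> D" if "t \<in> U" for t using that by (auto simp: U_def)
  have dInt: "((\<lambda>u. integral {0..u} f) has_derivative (\<lambda>h. of_real h * f t)) (at t)"
    if "t\<in>U" "f integrable_on {0..T}" "isCont f t" for f :: "real \<Rightarrow> complex" and t
  proof -
    have "((\<lambda>u. integral {0..u} f) has_vector_derivative f t) (at t within {0..T} - {})"
      by (rule integral_has_vector_derivative_continuous_at[OF that(2)])
         (use that tU[OF that(1)] in \<open>auto intro: continuous_at_imp_continuous_within\<close>)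
    then have "((\<lambda>u. integral {0..u} f) has_vector_derivative f t) (at t)"
      using at_within_Icc_at[of 0 t T] tU[OF that(1)] by simp
    then show ?thesis by (simp add: has_vector_derivative_def scaleR_conv_of_real)
  qed
  have dW: "((\<lambda>s. W s i j) has_derivative (\<lambda>h. of_real h * F i j t)) (at t)"
    if "t\<in>U" "i<d" "j<d" for t i j
  proof -
    have "((\<lambda>u. (if i=j then 1 else 0) + integral {0..u} (F i j)) has_derivative (\<lambda>h. of_real h * F i j t)) (at t)"
      using dInt[OF that(1) Fint[OF that(2,3)] isF[OF that]]
      by (subst add.commute) (rule has_derivative_add_const)
    then show ?thesis
      by (rule has_derivative_transform_within_open[where s="{0<..<T}"])
         (use that tU[OF that(1)] Wrep in auto)
  qed
  let ?Pm = "{p. p permutes {..<d}}"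
  have pin: "p i < d" if "p \<in> ?Pm" "i < d" for p i
    using permutes_in_image[of p "{..<d}" i] that by auto
  define g where "g t = det (mat d d (\<lambda>(i,j). W t i j))" for t
  have g_leib: "g t = (\<Sum>p\<in>?Pm. signof p * (\<Prod>i<d. W t i (p i)))" for t
    unfolding g_def by (rule det_leib)
  define trA where "trA s = (\<Sum>i<d. A s i i)" for s
  have dg: "(g has_derivative (\<lambda>h. of_real h * (trA t * g t))) (at t)" if t: "t\<in>U" for t
  proof -
    have "((\<lambda>s. \<Sum>p\<in>?Pm. signof p * (\<Prod>i<d. W s i (p i))) has_derivative
       (\<lambda>h. \<Sum>p\<in>?Pm. signof p * (\<Sum>i<d. (of_real h * F i (p i) t) * (\<Prod>j\<in>{..<d}-{i}. W t j (p j))))) (at t)"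
    proof (rule has_derivative_sum)
      fix p assume p: "p \<in> ?Pm"
      show "((\<lambda>s. signof p * (\<Prod>i<d. W s i (p i))) has_derivative
         (\<lambda>h. signof p * (\<Sum>i<d. (of_real h * F i (p i) t) * (\<Prod>j\<in>{..<d}-{i}. W t j (p j))))) (at t)"
        by (intro has_derivative_mult_right has_derivative_prod dW t pin[OF p]) auto
    qed
    moreover have "(\<lambda>h. \<Sum>p\<in>?Pm. signof p * (\<Sum>i<d. (of_real h * F i (p i) t) * (\<Prod>j\<in>{..<d}-{i}. W t j (p j))))
       = (\<lambda>h. of_real h * (trA t * g t))"
    proof
      fix h :: real
      have "(\<Sum>p\<in>?Pm. signof p * (\<Sum>i<d. (of_real h * F i (p i) t) * (\<Prod>j\<in>{..<d}-{i}. W t j (p j))))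
        = of_real h * (\<Sum>i<d. (\<Sum>p\<in>?Pm. signof p * (F i (p i) t * (\<Prod>j\<in>{..<d}-{i}. W t j (p j)))))"
        by (simp add: sum_distrib_left sum.swap[of _ ?Pm] mult_ac)
      also have "\<dots> = of_real h * (\<Sum>i<d. det (mat d d (\<lambda>(r,c). if r = i then F i c t else W t r c)))"
        by (rule arg_cong[where f="\<lambda>x. of_real h * x"], rule sum.cong[OF refl], rule det_row_expand) simp
      also have "\<dots> = of_real h * (\<Sum>i<d. A t i i * g t)"
        unfolding F_def g_def by (simp add: det_row_lin)
      also have "\<dots> = of_real h * (trA t * g t)"
        by (simp add: trA_def sum_distrib_right)
      finally show "(\<Sum>p\<in>?Pm. signof p * (\<Sum>i<d. (of_real h * F i (p i) t) * (\<Prod>j\<in>{..<d}-{i}. W t j (p j))))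
        = of_real h * (trA t * g t)" .
    qed
    ultimately show ?thesis unfolding g_leib[abs_def] by simp
  qed
  define G where "G t = integral {0..t} trA" for t
  have intA': "trA integrable_on {0..T}" using intA by (simp add: trA_def[abs_def])
  have dG: "(G has_derivative (\<lambda>h. of_real h * trA t)) (at t)" if t: "t\<in>U" for t
  proof -
    have "isCont trA t" unfolding trA_def by (intro isCont_sum ballI isA t) auto
    then show ?thesis unfolding G_def[abs_def] by (rule dInt[OF t intA'])
  qed
  define f where "f t = g t * exp (- G t)" for t
  have df: "(f has_derivative (\<lambda>h. 0)) (at t)" if t: "t\<in>U" for t
  proof -
    have e: "((\<lambda>s. exp (- G s)) has_derivative (\<lambda>h. (- (of_real h * trA t)) * exp (- G t))) (at t)"
    proof -
      have e1: "((\<lambda>s. - G s) has_derivative (\<lambda>h. - (of_real h * trA t))) (at t)"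
        using dG[OF t] by (intro has_derivative_minus)
      have e2: "(exp has_derivative (\<lambda>z. exp (- G t) * z)) (at (- G t))"
        using DERIV_exp[of "- G t"] by (simp add: has_field_derivative_def)
      show ?thesis using has_derivative_compose[OF e1 e2] by (simp add: mult.commute)
    qed
    have "(f has_derivative (\<lambda>h. g t * ((- (of_real h * trA t)) * exp (- G t)) + of_real h * (trA t * g t) * exp (- G t))) (at t)"
      unfolding f_def[abs_def] by (rule has_derivative_mult[OF dg[OF t] e])
    moreover have "(\<lambda>h. g t * ((- (of_real h * trA t)) * exp (- G t)) + of_real h * (trA t * g t) * exp (- G t)) = (\<lambda>h. 0)"
      by (rule ext) (simp add: algebra_simps)
    ultimately show ?thesis by (rule has_derivative_eq_rhs)
  qed
  have contg: "continuous_on {0..T} g"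
    unfolding g_leib[abs_def]
  proof (intro continuous_on_sum continuous_on_mult_left continuous_on_prod)
    fix p i assume "p \<in> {p. p permutes {..<d}}" "i \<in> {..<d}"
    then show "continuous_on {0..T} (\<lambda>s. W s i (p i))" using contW pin by auto
  qed
  have contG: "continuous_on {0..T} G"
    unfolding G_def by (rule indefinite_integral_continuous_1[OF intA'])
  have contf: "continuous_on {0..T} f"
    unfolding f_def[abs_def] by (intro continuous_intros contg contG)
  have W0: "mat d d (\<lambda>(i,j). W 0 i j) = 1\<^sub>m d"
  proof (rule eq_matI)
    fix i j assume "i < dim_row (1\<^sub>m d)" "j < dim_col (1\<^sub>m d)"
    then have "i < d" "j < d" by auto
    then show "mat d d (\<lambda>(i,j). W 0 i j) $$ (i,j) = 1\<^sub>m d $$ (i,j)"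
      using Wrep[of i j 0] T by simp
  qed auto
  have f0: "f 0 = 1" unfolding f_def g_def G_def W0 by simp
  have fd: "(f has_derivative (\<lambda>h. 0)) (at x within {0..T})" if "x \<in> {0..T} - (D \<union> {0,T})" for x
  proof -
    have "x \<in> U" using that unfolding U_def by auto
    then show ?thesis by (rule has_derivative_at_withinI[OF df])
  qed
  have fin: "finite (D \<union> {0,T})" using D by simp
  have Tin: "T \<in> {0..T}" using T by simp
  have "f T = 1"
    by (rule has_derivative_zero_unique_strong_interval[where k="D \<union> {0,T}" and a=0 and b=T and f=f and x=T, OF fin contf f0 fd Tin])
  then have "g T = exp (G T)"
    by (simp add: f_def exp_minus field_simps)
  then show ?thesis by (simp add: g_def G_def trA_def[abs_def])
qed




definition bs :: "nat \<Rightarrow> nat \<Rightarrow> nat set" where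
  "bs n x = {j. j < n \<and> bit x j}"

lemma popcount_bs: "popcount n x = card (bs n x)"
  by (simp add: popcount_def bs_def)

lemma finite_bs[simp]: "finite (bs n x)" by (simp add: bs_def)
lemma bs_sub: "bs n x \<subseteq> {..<n}" by (auto simp: bs_def)

lemma lt_pow2_iff: "(x::nat) < 2^n \<longleftrightarrow> (\<forall>i. bit x i \<longrightarrow> i < n)"
proof -
  have "x < 2^n \<longleftrightarrow> take_bit n x = x" by (simp add: take_bit_nat_eq_self_iff)
  also have "\<dots> \<longleftrightarrow> (\<forall>i. bit (take_bit n x) i = bit x i)" by (simp add: bit_eq_iff)
  also have "\<dots> \<longleftrightarrow> (\<forall>i. bit x i \<longrightarrow> i < n)" by (auto simp: bit_take_bit_iff)
  finally show ?thesis .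
qed

lemma bs_inj: "x < 2^n \<Longrightarrow> y < 2^n \<Longrightarrow> bs n x = bs n y \<Longrightarrow> x = y"
proof -
  assume x: "x < 2^n" and y: "y < 2^n" and e: "bs n x = bs n y"
  show "x = y"
  proof (rule bit_eqI)
    fix i
    show "bit x i = bit y i"
    proof (cases "i < n")
      case True then show ?thesis using e unfolding bs_def by blast
    next
      case False then show ?thesis using x y lt_pow2_iff by blast
    qed
  qed
qed

lemma bs_bij: "bij_betw (bs n) {..<2^n} (Pow {..<n})"
proof -
  have inj: "inj_on (bs n) {..<2^n}" by (auto intro: inj_onI bs_inj)
  have "bs n ` {..<2^n} \<subseteq> Pow {..<n}" using bs_sub by auto
  moreover have "card (bs n ` {..<2^n}) = card (Pow {..<n})"
    using card_image[OF inj] by (simp add: card_Pow)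
  ultimately have "bs n ` {..<2^n} = Pow {..<n}"
    by (intro card_subset_eq) auto
  then show ?thesis using inj unfolding bij_betw_def by simp
qed

lemma card_bs_sub:
  assumes S: "S \<subseteq> {..<n}"
  shows "card {x. x < 2^n \<and> bs n x \<subseteq> S} = 2 ^ card S"
proof -
  let ?A = "{x. x < 2^n \<and> bs n x \<subseteq> S}"
  have inj: "inj_on (bs n) ?A" by (auto intro: inj_onI bs_inj)
  have "bs n ` ?A = Pow S"
  proof
    show "bs n ` ?A \<subseteq> Pow S" by auto
    show "Pow S \<subseteq> bs n ` ?A"
    proof
      fix Y assume "Y \<in> Pow S"
      then have "Y \<in> Pow {..<n}" using S by auto
      then obtain x where "x \<in> {..<2^n}" "bs n x = Y"
        using bs_bij[of n] unfolding bij_betw_def by (metis imageE)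
      then show "Y \<in> bs n ` ?A" using \<open>Y \<in> Pow S\<close> by auto
    qed
  qed
  then have "card ?A = card (Pow S)" using card_image[OF inj] by simp
  also have "\<dots> = 2 ^ card S" using S finite_subset[OF S] by (simp add: card_Pow)
  finally show ?thesis .
qed

lemma flip_lt:
  assumes "j < n" "(x::nat) < 2^n" shows "flip_bit j x < 2^n"
  using assms unfolding lt_pow2_iff by (auto simp: bit_flip_bit_iff)

lemma flip_flip: "flip_bit j (flip_bit j (x::nat)) = x"
  by (rule bit_eqI) (auto simp: bit_flip_bit_iff)

lemma bs_flip:
  assumes "j < n"
  shows "bs n (flip_bit j x) = (if j \<in> bs n x then bs n x - {j} else insert j (bs n x))"
  using assms by (auto simp: bs_def bit_flip_bit_iff)

lemma sign_flip:
  assumes "j < n"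
  shows "(-1::'a::comm_ring_1) ^ card (bs n (flip_bit j x)) = - ((-1) ^ card (bs n x))"
proof (cases "j \<in> bs n x")
  case True
  then have c: "card (bs n x) = Suc (card (bs n x - {j}))"
    by (metis card_Suc_Diff1 finite_bs)
  have "bs n (flip_bit j x) = bs n x - {j}" using True assms by (simp add: bs_flip)
  then have "(-1::'a) ^ card (bs n x) = - ((-1) ^ card (bs n (flip_bit j x)))"
    by (subst c) simp
  then show ?thesis by simp
next
  case False
  then show ?thesis using assms by (simp add: bs_flip)
qed

lemma invol_zero:
  fixes f :: "nat \<Rightarrow> 'a::field_char_0"
  assumes j: "j \<in> K" and K: "K \<subseteq> {..<n}"
    and f: "\<And>x. x < 2^n \<Longrightarrow> f (flip_bit j x) = f x"
  shows "(\<Sum>x\<in>{x. x < 2^n \<and> bs n x \<subseteq> K}. (-1)^card (bs n x) * f x) = 0"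
proof -
  let ?A = "{x. x < 2^n \<and> bs n x \<subseteq> K}"
  let ?g = "\<lambda>x. (-1::'a)^card (bs n x) * f x"
  have jn: "j < n" using j K by auto
  have mapA: "flip_bit j x \<in> ?A" if "x \<in> ?A" for x
    using that jn j flip_lt[OF jn] by (auto simp: bs_flip)
  have bij: "bij_betw (flip_bit j) ?A ?A"
    by (rule bij_betw_byWitness[where f'="flip_bit j"]) (use mapA flip_flip in auto)
  have "sum ?g ?A = sum (?g \<circ> flip_bit j) ?A"
    using sum.reindex_bij_betw[OF bij, of ?g] by (simp add: comp_def)
  also have "\<dots> = sum (\<lambda>x. - ?g x) ?A"
    by (rule sum.cong) (simp_all add: f sign_flip[OF jn, where 'a='a])
  also have "\<dots> = - sum ?g ?A" by (simp add: sum_negf)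
  finally show ?thesis by simp
qed

lemma card_supsets:
  assumes U: "finite U" and X: "X \<subseteq> U"
  shows "card {K. K \<subseteq> U \<and> card K = k \<and> X \<subseteq> K} =
         (if card X \<le> k then (card U - card X) choose (k - card X) else 0)"
proof (cases "card X \<le> k")
  case False
  have E: "{K. K \<subseteq> U \<and> card K = k \<and> X \<subseteq> K} = {}"
  proof (rule ccontr)
    assume "{K. K \<subseteq> U \<and> card K = k \<and> X \<subseteq> K} \<noteq> {}"
    then obtain K where "K \<subseteq> U" "card K = k" "X \<subseteq> K" by auto
    then have "card X \<le> k" using card_mono finite_subset U by metis
    then show False using False by simp
  qed
  show ?thesis unfolding E using False by simp
next
  case True
  have fX: "finite X" using finite_subset[OF X U] .
  have "bij_betw (\<lambda>K. K - X) {K. K \<subseteq> U \<and> card K = k \<and> X \<subseteq> K} {L. L \<subseteq> U - X \<and> card L = k - card X}"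
  proof (rule bij_betw_byWitness[where f'="\<lambda>L. L \<union> X"])
    show "\<forall>a\<in>{K. K \<subseteq> U \<and> card K = k \<and> X \<subseteq> K}. a - X \<union> X = a" by auto
    show "\<forall>a\<in>{L. L \<subseteq> U - X \<and> card L = k - card X}. a \<union> X - X = a" by auto
    show "(\<lambda>K. K - X) ` {K. K \<subseteq> U \<and> card K = k \<and> X \<subseteq> K} \<subseteq> {L. L \<subseteq> U - X \<and> card L = k - card X}"
    proof
      fix L assume "L \<in> (\<lambda>K. K - X) ` {K. K \<subseteq> U \<and> card K = k \<and> X \<subseteq> K}"
      then obtain K where K: "K \<subseteq> U" "card K = k" "X \<subseteq> K" "L = K - X" by auto
      have "card (K - X) = card K - card X" using K fX by (simp add: card_Diff_subset)
      then show "L \<in> {L. L \<subseteq> U - X \<and> card L = k - card X}" using K by auto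
    qed
    show "(\<lambda>L. L \<union> X) ` {L. L \<subseteq> U - X \<and> card L = k - card X} \<subseteq> {K. K \<subseteq> U \<and> card K = k \<and> X \<subseteq> K}"
    proof
      fix K assume "K \<in> (\<lambda>L. L \<union> X) ` {L. L \<subseteq> U - X \<and> card L = k - card X}"
      then obtain L where L: "L \<subseteq> U - X" "card L = k - card X" "K = L \<union> X" by auto
      have fL: "finite L" using finite_subset[OF L(1)] U by auto
      have "card (L \<union> X) = card L + card X" using L fL fX by (intro card_Un_disjoint) auto
      then show "K \<in> {K. K \<subseteq> U \<and> card K = k \<and> X \<subseteq> K}" using L X True by auto
    qed
  qed
  then have "card {K. K \<subseteq> U \<and> card K = k \<and> X \<subseteq> K} = card {L. L \<subseteq> U - X \<and> card L = k - card X}"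
    by (rule bij_betw_same_card)
  also have "\<dots> = card (U - X) choose (k - card X)" using U by (intro n_subsets) auto
  also have "card (U - X) = card U - card X" using X fX by (simp add: card_Diff_subset)
  finally show ?thesis using True by simp
qed

lemma regroup:
  fixes F :: "nat \<Rightarrow> 'a::comm_ring_1"
  shows "(\<Sum>m\<le>k. (-1)^m * of_nat ((n-m) choose (k-m)) * (\<Sum>x\<in>weight_space n m. F x)) =
    (\<Sum>K\<in>{K. K \<subseteq> {..<n} \<and> card K = k}. \<Sum>x\<in>{x. x < 2^n \<and> bs n x \<subseteq> K}. (-1)^card (bs n x) * F x)"
proof -
  let ?KS = "{K. K \<subseteq> {..<n} \<and> card K = k}"
  have fKS: "finite ?KS" by (rule finite_subset[of _ "Pow {..<n}"]) auto
  have "(\<Sum>m\<le>k. (-1)^m * of_nat ((n-m) choose (k-m)) * (\<Sum>x\<in>weight_space n m. F x))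
     = (\<Sum>m\<in>{..k}. \<Sum>x\<in>{x. x \<in> {..<2^n} \<and> card (bs n x) = m}. (-1)^m * of_nat ((n-m) choose (k-m)) * F x)"
    by (simp add: weight_space_def dimH_def popcount_bs sum_distrib_left)
  also have "\<dots> = (\<Sum>x\<in>{..<2^n}. \<Sum>m\<in>{m. m \<in> {..k} \<and> card (bs n x) = m}. (-1)^m * of_nat ((n-m) choose (k-m)) * F x)"
    by (rule sum.swap_restrict) auto
  also have "\<dots> = (\<Sum>x\<in>{..<2^n}. if card (bs n x) \<le> k then (-1)^card (bs n x) * of_nat ((n - card (bs n x)) choose (k - card (bs n x))) * F x else 0)"
  proof (rule sum.cong[OF refl])
    fix x
    have "{m. m \<in> {..k} \<and> card (bs n x) = m} = (if card (bs n x) \<le> k then {card (bs n x)} else {})" by auto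
    then show "(\<Sum>m\<in>{m. m \<in> {..k} \<and> card (bs n x) = m}. (-1)^m * of_nat ((n-m) choose (k-m)) * F x) =
      (if card (bs n x) \<le> k then (-1)^card (bs n x) * of_nat ((n - card (bs n x)) choose (k - card (bs n x))) * F x else 0)"
      by simp
  qed
  also have "\<dots> = (\<Sum>x\<in>{..<2^n}. \<Sum>K\<in>{K. K \<in> ?KS \<and> bs n x \<subseteq> K}. (-1)^card (bs n x) * F x)"
  proof (rule sum.cong[OF refl])
    fix x
    have "{K. K \<in> ?KS \<and> bs n x \<subseteq> K} = {K. K \<subseteq> {..<n} \<and> card K = k \<and> bs n x \<subseteq> K}" by auto
    then have "card {K. K \<in> ?KS \<and> bs n x \<subseteq> K} = (if card (bs n x) \<le> k then (n - card (bs n x)) choose (k - card (bs n x)) else 0)"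
      using card_supsets[of "{..<n}" "bs n x" k] bs_sub by simp
    then show "(if card (bs n x) \<le> k then (-1)^card (bs n x) * of_nat ((n - card (bs n x)) choose (k - card (bs n x))) * F x else 0)
      = (\<Sum>K\<in>{K. K \<in> ?KS \<and> bs n x \<subseteq> K}. (-1)^card (bs n x) * F x)"
      by (simp add: mult_ac)
  qed
  also have "\<dots> = (\<Sum>K\<in>?KS. \<Sum>x\<in>{x. x \<in> {..<2^n} \<and> bs n x \<subseteq> K}. (-1)^card (bs n x) * F x)"
    by (rule sum.swap_restrict) (use fKS in auto)
  finally show ?thesis by simp
qed

lemma local_zero:
  fixes B :: "complex mat"
  assumes act: "acts_on n S B" and cS: "card S < k" and K: "K \<subseteq> {..<n}" "card K = k"
  shows "(\<Sum>x\<in>{x. x < 2^n \<and> bs n x \<subseteq> K}. (-1)^card (bs n x) * B $$ (x,x)) = 0"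
proof -
  have "\<not> K \<subseteq> S"
  proof
    assume "K \<subseteq> S"
    have "finite S" using act unfolding acts_on_def by (meson finite_lessThan finite_subset)
    then have "card K \<le> card S" using \<open>K \<subseteq> S\<close> card_mono by blast
    then show False using cS K by simp
  qed
  then obtain j where j: "j \<in> K" "j \<notin> S" by auto
  have jn: "j < n" using j K by auto
  show ?thesis
  proof (rule invol_zero[OF j(1) K(1)])
    fix x :: nat assume x: "x < 2^n"
    have fx: "flip_bit j x < 2^n" by (rule flip_lt[OF jn x])
    have c4: "\<forall>x < dimH n. \<forall>y < dimH n. \<forall>x' < dimH n. \<forall>y' < dimH n.
        (\<forall>j<n. j \<notin> S \<longrightarrow> bit x j = bit y j) \<longrightarrow>
        (\<forall>j<n. j \<notin> S \<longrightarrow> bit x' j = bit y' j) \<longrightarrow>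
        (\<forall>j\<in>S. bit x j = bit x' j \<and> bit y j = bit y' j) \<longrightarrow>
        B $$ (x,y) = B $$ (x',y')" using act unfolding acts_on_def by blast
    have s: "\<forall>i\<in>S. bit x i = bit (flip_bit j x) i \<and> bit x i = bit (flip_bit j x) i"
      using j(2) by (auto simp: bit_flip_bit_iff)
    have "B $$ (x,x) = B $$ (flip_bit j x, flip_bit j x)"
      using c4[rule_format, of x x "flip_bit j x" "flip_bit j x"] x fx s unfolding dimH_def by blast
    then show "B $$ (flip_bit j x, flip_bit j x) = B $$ (x,x)" by simp
  qed
qed

definition zs :: "nat set \<Rightarrow> nat \<Rightarrow> real" where
  "zs S x = (\<Prod>j\<in>S. if bit x j then -1 else 1)"

lemma zs_sum:
  assumes S: "S \<subseteq> {..<n}" "card S = k" and K: "K \<subseteq> {..<n}" "card K = k"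
  shows "(\<Sum>x\<in>{x. x < 2^n \<and> bs n x \<subseteq> K}. (-1)^card (bs n x) * zs S x) = (if K = S then 2^k else 0)"
proof (cases "K = S")
  case False
  have fS: "finite S" using S finite_subset by blast
  have "\<not> K \<subseteq> S"
  proof
    assume "K \<subseteq> S"
    then have "K = S" using card_subset_eq[OF fS] S K by simp
    then show False using False by simp
  qed
  then obtain j where j: "j \<in> K" "j \<notin> S" by auto
  have jn: "j < n" using j K by auto
  have "(\<Sum>x\<in>{x. x < 2^n \<and> bs n x \<subseteq> K}. (-1)^card (bs n x) * zs S x) = 0"
  proof (rule invol_zero[OF j(1) K(1)])
    fix x :: nat assume x: "x < 2^n"
    show "zs S (flip_bit j x) = zs S x"
      unfolding zs_def using j(2) by (intro prod.cong refl) (auto simp: bit_flip_bit_iff)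
  qed
  then show ?thesis using False by simp
next
  case True
  have fS: "finite S" using S finite_subset by blast
  have one: "(-1::real)^card (bs n x) * zs S x = 1" if "bs n x \<subseteq> S" for x
  proof -
    have "zs S x = (\<Prod>j\<in>S \<inter> {j. bit x j}. -1) * (\<Prod>j\<in>S \<inter> - {j. bit x j}. 1)"
      unfolding zs_def by (rule prod.If_cases[OF fS])
    also have "S \<inter> {j. bit x j} = bs n x" using that S unfolding bs_def by auto
    finally have "zs S x = (-1) ^ card (bs n x)" by simp
    then show ?thesis by (simp flip: power_mult_distrib)
  qed
  have "(\<Sum>x\<in>{x. x < 2^n \<and> bs n x \<subseteq> K}. (-1)^card (bs n x) * zs S x) = (\<Sum>x\<in>{x. x < 2^n \<and> bs n x \<subseteq> S}. 1)"
    using True one by (intro sum.cong) auto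
  also have "\<dots> = 2 ^ k" using card_bs_sub[OF S(1)] S(2) by simp
  finally show ?thesis using True by simp
qed




lemma mult_entry:
  fixes A B :: "'a::comm_ring_1 mat"
  assumes "A \<in> carrier_mat N N" "B \<in> carrier_mat N N" "x < N" "y < N"
  shows "(A*B) $$ (x,y) = (\<Sum>z<N. A $$ (x,z) * B $$ (z,y))"
  using assms by (simp add: scalar_prod_def atLeast0LessThan)

lemma Ztot_entry:
  assumes "x < dimH n" "y < dimH n"
  shows "Ztot n $$ (x,y) = (if x = y then of_nat n - 2 * of_nat (popcount n x) else 0)"
proof -
  have "Ztot n $$ (x,y) = (\<Sum>j<n. Zop n j $$ (x,y))" using assms by (simp add: Ztot_def)
  also have "\<dots> = (if x = y then (\<Sum>j<n. if bit x j then -1 else 1) else 0)"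
    using assms by (simp add: Zop_def)
  also have "(\<Sum>j<n. if bit x j then -1 else (1::complex)) = of_nat n - 2 * of_nat (popcount n x)"
  proof -
    have "(\<Sum>j<n. if bit x j then -1 else (1::complex)) =
       (\<Sum>j\<in>{..<n} \<inter> {j. bit x j}. -1) + (\<Sum>j\<in>{..<n} \<inter> - {j. bit x j}. 1)"
      by (rule sum.If_cases) simp
    also have "{..<n} \<inter> {j. bit x j} = bs n x" by (auto simp: bs_def)
    also have "{..<n} \<inter> - {j. bit x j} = {..<n} - bs n x" by (auto simp: bs_def)
    finally have e0: "(\<Sum>j<n. if bit x j then -1 else (1::complex)) = (\<Sum>j\<in>bs n x. -1) + (\<Sum>j\<in>{..<n} - bs n x. 1)" .
    have cd: "card ({..<n} - bs n x) = n - card (bs n x)" using bs_sub by (simp add: card_Diff_subset)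
    have e: "(\<Sum>j<n. if bit x j then -1 else (1::complex)) = - of_nat (card (bs n x)) + of_nat (n - card (bs n x))"
      unfolding e0 by (simp add: cd)
    have "card (bs n x) \<le> n" using card_mono[OF _ bs_sub, of n x] by simp
    then show ?thesis unfolding e popcount_bs by (simp add: of_nat_diff)
  qed
  finally show ?thesis .
qed

lemma U1_block:
  fixes A :: "complex mat"
  assumes U: "U1_invariant n A" and A: "A \<in> carrier_mat (dimH n) (dimH n)"
    and x: "x < dimH n" and y: "y < dimH n" and p: "popcount n x \<noteq> popcount n y"
  shows "A $$ (x,y) = 0"
proof -
  have Zc: "Ztot n \<in> carrier_mat (dimH n) (dimH n)" by (simp add: Ztot_def)
  let ?z = "\<lambda>x. of_nat n - 2 * of_nat (popcount n x) :: complex"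
  have "(A * Ztot n) $$ (x,y) = (\<Sum>z<dimH n. A $$ (x,z) * Ztot n $$ (z,y))"
    by (rule mult_entry[OF A Zc x y])
  also have "\<dots> = (\<Sum>z<dimH n. if z = y then A $$ (x,y) * ?z y else 0)"
    by (rule sum.cong) (use y in \<open>auto simp: Ztot_entry\<close>)
  also have "\<dots> = A $$ (x,y) * ?z y" using y by simp
  finally have 1: "(A * Ztot n) $$ (x,y) = A $$ (x,y) * ?z y" .
  have "(Ztot n * A) $$ (x,y) = (\<Sum>z<dimH n. Ztot n $$ (x,z) * A $$ (z,y))"
    by (rule mult_entry[OF Zc A x y])
  also have "\<dots> = (\<Sum>z<dimH n. if z = x then ?z x * A $$ (x,y) else 0)"
    by (rule sum.cong) (use x in \<open>auto simp: Ztot_entry\<close>)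
  also have "\<dots> = ?z x * A $$ (x,y)" using x by simp
  finally have 2: "(Ztot n * A) $$ (x,y) = ?z x * A $$ (x,y)" .
  from U have "A * Ztot n = Ztot n * A" unfolding U1_invariant_def .
  then have "(A * Ztot n) $$ (x,y) = (Ztot n * A) $$ (x,y)" by simp
  then have "A $$ (x,y) * ?z y = ?z x * A $$ (x,y)" unfolding 1 2 .
  then have "A $$ (x,y) * (?z y - ?z x) = 0" by (simp add: algebra_simps)
  moreover have "?z y \<noteq> ?z x"
  proof
    assume "?z y = ?z x"
    then have "(of_nat (popcount n y) :: complex) = of_nat (popcount n x)" by simp
    then show False using p by simp
  qed
  ultimately show ?thesis by simp
qed

lemma sum_sum_list_swap:
  "(\<Sum>x\<in>A. (\<Sum>p\<leftarrow>ts. f p x)) = (\<Sum>p\<leftarrow>ts. \<Sum>x\<in>A. f p x)"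
  by (induction ts) (auto simp: sum.distrib)

lemma sum_list_zero: "(\<And>p. p \<in> set ts \<Longrightarrow> f p = 0) \<Longrightarrow> (\<Sum>p\<leftarrow>ts. f p) = (0::'a::monoid_add)"
  by (induction ts) auto

lemma pick_bij:
  assumes "finite B"
  shows "bij_betw (pick B) {..<card B} B"
proof -
  have inj: "inj_on (pick B) {..<card B}"
  proof (rule inj_onI)
    fix i j assume "i \<in> {..<card B}" "j \<in> {..<card B}" "pick B i = pick B j"
    then show "i = j" using pick_mono_le[of i B j] pick_mono_le[of j B i]
      by (metis lessThan_iff nat_neq_iff order.irrefl)
  qed
  have "pick B ` {..<card B} \<subseteq> B" using pick_in_set_le by auto
  moreover have "card (pick B ` {..<card B}) = card B" using card_image[OF inj] by simp
  ultimately have "pick B ` {..<card B} = B" using assms by (intro card_subset_eq) auto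
  then show ?thesis using inj unfolding bij_betw_def by simp
qed

theorem mainTheorem12:
  fixes n k :: nat and T :: real
    and Hk1 :: "real \<Rightarrow> complex mat"
    and a :: "nat set \<Rightarrow> real \<Rightarrow> real"
    and H V :: "real \<Rightarrow> complex mat"
  assumes "1 \<le> n" and "1 \<le> k" and "k \<le> n" and "0 \<le> T"
    and Hk1_herm: "\<forall>t\<in>{0..T}. hermitian_op n (Hk1 t)"
    and Hk1_U1: "\<forall>t\<in>{0..T}. U1_invariant n (Hk1 t)"
    and Hk1_local: "\<forall>t\<in>{0..T}. k_local n (k - 1) (Hk1 t)"
    and Hk1_pc: "\<forall>x < dimH n. \<forall>y < dimH n. piecewise_cont T (\<lambda>t. Hk1 t $$ (x,y))"
    and a_pc: "\<forall>S. S \<subseteq> {..<n} \<and> card S = k \<longrightarrow> piecewise_cont T (a S)"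
    and H_def: "\<forall>t\<in>{0..T}. H t = Hk1 t + mat (dimH n) (dimH n)
        (\<lambda>(x,y). \<Sum>S\<in>{S. S \<subseteq> {..<n} \<and> card S = k}. of_real (a S t) * Zprod n S $$ (x,y))"
    and H_U1: "\<forall>t\<in>{0..T}. U1_invariant n (H t)"
    and V_toe: "time_ordered_exp n T H V"
  shows "cong_2pi (beta n (V T) k)
           (- (2 ^ k) * integral {0..T} (\<lambda>t. \<Sum>S\<in>{S. S \<subseteq> {..<n} \<and> card S = k}. a S t))"
proof -
  let ?N = "dimH n"
  define KS where "KS = {S. S \<subseteq> {..<n} \<and> card S = k}"
  have fKS: "finite KS" unfolding KS_def by (rule finite_subset[of _ "Pow {..<n}"]) auto
  have Vcar: "V t \<in> carrier_mat ?N ?N" if "t \<in> {0..T}" for t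
    using V_toe that unfolding time_ordered_exp_def by blast
  have Veq: "((\<lambda>s. - \<i> * (H s * V s) $$ (x,y)) has_integral (V t $$ (x,y) - 1\<^sub>m ?N $$ (x,y))) {0..t}"
    if "t\<in>{0..T}" "x < ?N" "y < ?N" for t x y
    using V_toe that unfolding time_ordered_exp_def by blast
  have Hk1car: "Hk1 t \<in> carrier_mat ?N ?N" if "t \<in> {0..T}" for t
    using Hk1_herm that unfolding hermitian_op_def by blast
  have Hcar: "H t \<in> carrier_mat ?N ?N" if "t \<in> {0..T}" for t
    using H_def Hk1car that by auto
  have Hent: "H t $$ (x,y) = Hk1 t $$ (x,y) + (\<Sum>S\<in>KS. of_real (a S t) * Zprod n S $$ (x,y))"
    if "t\<in>{0..T}" "x<?N" "y<?N" for t x y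
    using H_def that Hk1car[OF that(1)] unfolding KS_def by simp
  have Hblock: "H t $$ (x,y) = 0" if "t\<in>{0..T}" "x<?N" "y<?N" "popcount n x \<noteq> popcount n y" for t x y
    using U1_block[OF H_U1[rule_format, OF that(1)] Hcar[OF that(1)] that(2-4)] .
  define r where "r x s = Re (Hk1 s $$ (x,x)) + (\<Sum>S\<in>KS. a S s * zs S x)" for x s
  have Zdiag: "Zprod n S $$ (x,x) = of_real (zs S x)" if "x < ?N" for S x
  proof -
    have "Zprod n S $$ (x,x) = (\<Prod>j\<in>S. (if bit x j then -1 else 1 :: complex))"
      using that by (simp add: Zprod_def)
    also have "\<dots> = (\<Prod>j\<in>S. of_real (if bit x j then -1 else 1))"
      by (rule prod.cong) auto
    also have "\<dots> = of_real (zs S x)" unfolding zs_def by (rule of_real_prod[symmetric])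
    finally show ?thesis .
  qed
  have Hk1real: "Hk1 t $$ (x,x) = of_real (Re (Hk1 t $$ (x,x)))" if "t\<in>{0..T}" "x<?N" for t x
  proof -
    have "Hk1 t $$ (x,x) = cnj (Hk1 t $$ (x,x))"
      using Hk1_herm that unfolding hermitian_op_def by blast
    then have "Im (Hk1 t $$ (x,x)) = - Im (Hk1 t $$ (x,x))" by (metis cnj.simps(2))
    then have "Im (Hk1 t $$ (x,x)) = 0" by simp
    then show ?thesis by (simp add: complex_eq_iff)
  qed
  have Hdiag: "H t $$ (x,x) = of_real (r x t)" if "t\<in>{0..T}" "x<?N" for t x
  proof -
    have "H t $$ (x,x) = Hk1 t $$ (x,x) + (\<Sum>S\<in>KS. of_real (a S t) * Zprod n S $$ (x,x))"
      by (rule Hent[OF that that(2)])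
    also have "\<dots> = of_real (Re (Hk1 t $$ (x,x))) + (\<Sum>S\<in>KS. of_real (a S t) * of_real (zs S x))"
      by (subst Hk1real[OF that]) (simp add: Zdiag[OF that(2)])
    also have "\<dots> = of_real (r x t)" by (simp add: r_def)
    finally show ?thesis .
  qed
  define DH where "DH x y = (SOME D. finite D \<and> continuous_on ({0..T} - D) (\<lambda>t. Hk1 t $$ (x,y)))" for x y
  have DH: "finite (DH x y) \<and> continuous_on ({0..T} - DH x y) (\<lambda>t. Hk1 t $$ (x,y))" if "x<?N" "y<?N" for x y
  proof -
    have "\<exists>D. finite D \<and> continuous_on ({0..T} - D) (\<lambda>t. Hk1 t $$ (x,y))"
      using Hk1_pc that unfolding piecewise_cont_def by blast
    then show ?thesis unfolding DH_def by (rule someI_ex)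
  qed
  define Da where "Da S = (SOME D. finite D \<and> continuous_on ({0..T} - D) (a S))" for S
  have Da: "finite (Da S) \<and> continuous_on ({0..T} - Da S) (a S)" if "S \<in> KS" for S
  proof -
    have "\<exists>D. finite D \<and> continuous_on ({0..T} - D) (a S)"
      using a_pc that unfolding piecewise_cont_def KS_def by blast
    then show ?thesis unfolding Da_def by (rule someI_ex)
  qed
  define Dall where "Dall = (\<Union>x<?N. \<Union>y<?N. DH x y) \<union> (\<Union>S\<in>KS. Da S)"
  have fDall: "finite Dall" unfolding Dall_def using DH Da fKS by auto
  have contH: "continuous_on ({0..T} - Dall) (\<lambda>s. H s $$ (x,y))" if xy: "x<?N" "y<?N" for x y
  proof -
    have c1: "continuous_on ({0..T} - Dall) (\<lambda>t. Hk1 t $$ (x,y))"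
      by (rule continuous_on_subset[of "{0..T} - DH x y"]) (use DH[OF xy] xy in \<open>auto simp: Dall_def\<close>)
    have c2: "continuous_on ({0..T} - Dall) (a S)" if "S \<in> KS" for S
      by (rule continuous_on_subset[of "{0..T} - Da S"]) (use Da[OF that] that in \<open>auto simp: Dall_def\<close>)
    have "continuous_on ({0..T} - Dall) (\<lambda>s. Hk1 s $$ (x,y) + (\<Sum>S\<in>KS. of_real (a S s) * Zprod n S $$ (x,y)))"
      by (intro continuous_on_add c1 continuous_on_sum continuous_on_mult_right continuous_on_of_real c2)
    then show ?thesis
      by (rule continuous_on_eq) (use Hent xy in auto)
  qed
  have rint: "r x integrable_on {0..T}" if x: "x<?N" for x
  proof -
    have "(\<lambda>t. Hk1 t $$ (x,x)) integrable_on {0..T}"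
      using pc_integrable[of T "\<lambda>t. Hk1 t $$ (x,x)" T] Hk1_pc x \<open>0 \<le> T\<close> by auto
    then have i1: "(\<lambda>t. Re (Hk1 t $$ (x,x))) integrable_on {0..T}"
      using integrable_linear[OF _ bounded_linear_Re] by (simp add: comp_def)
    have i2: "(\<lambda>t. a S t * zs S x) integrable_on {0..T}" if "S \<in> KS" for S
      using pc_integrable[of T "a S" T] a_pc that \<open>0 \<le> T\<close>
      by (intro integrable_on_mult_left) (auto simp: KS_def)
    show ?thesis unfolding r_def[abs_def]
      by (intro integrable_add i1 integrable_sum fKS i2)
  qed
  define \<rho> where "\<rho> m = integral {0..T} (\<lambda>s. \<Sum>x\<in>weight_space n m. r x s)" for m
  have detblock: "det (submatrix (V T) (weight_space n m) (weight_space n m)) = exp (- \<i> * of_real (\<rho> m))" for m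
  proof -
    define B where "B = weight_space n m"
    define d where "d = card B"
    define p where "p = pick B"
    have BN: "B \<subseteq> {..<?N}" unfolding B_def weight_space_def by auto
    have fB: "finite B" using BN finite_subset by blast
    have pb: "bij_betw p {..<d} B" unfolding p_def d_def by (rule pick_bij[OF fB])
    have pB: "p i \<in> B" if "i < d" for i using pb that unfolding bij_betw_def by auto
    have pN: "p i < ?N" if "i < d" for i using pB[OF that] BN by auto
    have ppc: "popcount n (p i) = m" if "i < d" for i using pB[OF that] unfolding B_def weight_space_def by auto
    have pinj: "p i = p j \<longleftrightarrow> i = j" if "i < d" "j < d" for i j
      using pb that unfolding bij_betw_def inj_on_def by auto
    have T0: "T \<in> {0..T}" using \<open>0 \<le> T\<close> by simp
    define A where "A s i j = - \<i> * H s $$ (p i, p j)" for s i j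
    define W where "W s i j = V s $$ (p i, p j)" for s i j
    have prod: "- \<i> * (H s * V s) $$ (p i, p j) = (\<Sum>l<d. A s i l * W s l j)"
      if "s \<in> {0..T}" "i < d" "j < d" for s i j
    proof -
      have "(H s * V s) $$ (p i, p j) = (\<Sum>z<?N. H s $$ (p i, z) * V s $$ (z, p j))"
        by (rule mult_entry[OF Hcar[OF that(1)] Vcar[OF that(1)] pN[OF that(2)] pN[OF that(3)]])
      also have "\<dots> = (\<Sum>z\<in>B. H s $$ (p i, z) * V s $$ (z, p j))"
      proof (rule sum.mono_neutral_right)
        show "finite {..<?N}" by simp
        show "B \<subseteq> {..<?N}" by (rule BN)
        show "\<forall>z\<in>{..<?N} - B. H s $$ (p i, z) * V s $$ (z, p j) = 0"
        proof
          fix z assume z: "z \<in> {..<?N} - B"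
          then have "popcount n z \<noteq> m" unfolding B_def weight_space_def by auto
          then have "H s $$ (p i, z) = 0"
            using Hblock[OF that(1) pN[OF that(2)], of z] z ppc[OF that(2)] by auto
          then show "H s $$ (p i, z) * V s $$ (z, p j) = 0" by simp
        qed
      qed
      also have "\<dots> = (\<Sum>l<d. H s $$ (p i, p l) * V s $$ (p l, p j))"
        using sum.reindex_bij_betw[OF pb, of "\<lambda>z. H s $$ (p i, z) * V s $$ (z, p j)"] by simp
      finally show ?thesis unfolding A_def W_def by (simp add: sum_distrib_left mult.assoc)
    qed
    have eq: "((\<lambda>s. \<Sum>l<d. A s i l * W s l j) has_integral (W t i j - (if i = j then 1 else 0))) {0..t}"
      if "i<d" "j<d" "t\<in>{0..T}" for i j t
    proof -
      have e1: "1\<^sub>m ?N $$ (p i, p j) = (if i = j then 1 else 0)"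
        using pN[OF that(1)] pN[OF that(2)] pinj[OF that(1,2)] by simp
      have h1: "((\<lambda>s. - \<i> * (H s * V s) $$ (p i, p j)) has_integral (W t i j - (if i = j then 1 else 0))) {0..t}"
        using Veq[OF that(3) pN[OF that(1)] pN[OF that(2)]] unfolding e1 W_def .
      have c: "- \<i> * (H s * V s) $$ (p i, p j) = (\<Sum>l<d. A s i l * W s l j)" if "s \<in> {0..t}" for s
      proof -
        have "s \<in> {0..T}" using that \<open>t\<in>{0..T}\<close> by auto
        then show ?thesis by (rule prod[OF _ \<open>i<d\<close> \<open>j<d\<close>])
      qed
      show ?thesis
        using h1 has_integral_cong[of "{0..t}" "\<lambda>s. - \<i> * (H s * V s) $$ (p i, p j)" "\<lambda>s. \<Sum>l<d. A s i l * W s l j", OF c]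
        by simp
    qed
    have contA: "continuous_on ({0..T} - Dall) (\<lambda>s. A s i j)" if "i<d" "j<d" for i j
      unfolding A_def by (intro continuous_on_mult_left contH pN that)
    have trA: "(\<Sum>i<d. A s i i) = - \<i> * of_real (\<Sum>x\<in>B. r x s)" if "s \<in> {0..T}" for s
    proof -
      have "(\<Sum>i<d. A s i i) = - \<i> * (\<Sum>i<d. H s $$ (p i, p i))"
        unfolding A_def by (simp add: sum_distrib_left)
      also have "(\<Sum>i<d. H s $$ (p i, p i)) = (\<Sum>x\<in>B. H s $$ (x, x))"
        using sum.reindex_bij_betw[OF pb, of "\<lambda>x. H s $$ (x, x)"] by simp
      also have "\<dots> = (\<Sum>x\<in>B. of_real (r x s))"
        using Hdiag[OF that] BN by (intro sum.cong refl) auto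
      finally show ?thesis by simp
    qed
    have rBint: "(\<lambda>s. \<Sum>x\<in>B. r x s) integrable_on {0..T}"
      using fB BN by (intro integrable_sum rint) auto
    have ofint: "(\<lambda>s. of_real (\<Sum>x\<in>B. r x s) :: complex) integrable_on {0..T}"
      using integrable_linear[OF rBint bounded_linear_of_real] by (simp add: comp_def)
    have intA: "(\<lambda>s. \<Sum>i<d. A s i i) integrable_on {0..T}"
    proof -
      have "(\<lambda>s. - \<i> * of_real (\<Sum>x\<in>B. r x s)) integrable_on {0..T}"
        by (rule integrable_on_mult_right[OF ofint])
      then show ?thesis using integrable_cong[of "{0..T}" "\<lambda>s. \<Sum>i<d. A s i i"] trA by simp
    qed
    have L: "det (mat d d (\<lambda>(i,j). W T i j)) = exp (integral {0..T} (\<lambda>s. \<Sum>i<d. A s i i))"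
      by (rule liouville[OF \<open>0 \<le> T\<close> fDall eq contA intA])
    have "integral {0..T} (\<lambda>s. \<Sum>i<d. A s i i) = integral {0..T} (\<lambda>s. - \<i> * of_real (\<Sum>x\<in>B. r x s))"
      by (rule integral_cong) (rule trA)
    also have "\<dots> = - \<i> * integral {0..T} (\<lambda>s. of_real (\<Sum>x\<in>B. r x s))"
      by simp
    also have "integral {0..T} (\<lambda>s. of_real (\<Sum>x\<in>B. r x s) :: complex) = of_real (\<rho> m)"
      using integral_linear[OF rBint bounded_linear_of_real] unfolding \<rho>_def B_def by (simp add: comp_def)
    finally have I: "integral {0..T} (\<lambda>s. \<Sum>i<d. A s i i) = - \<i> * of_real (\<rho> m)" .
    have "{i. i < dim_row (V T) \<and> i \<in> B} = B" "{i. i < dim_col (V T) \<and> i \<in> B} = B"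
      using Vcar[OF T0] BN by auto
    then have "submatrix (V T) B B = mat d d (\<lambda>(i,j). W T i j)"
      unfolding submatrix_def d_def W_def p_def by simp
    then show ?thesis using L I unfolding B_def by simp
  qed
  have "\<exists>z::int. theta n (V T) m = - \<rho> m - of_int z * (2*pi)" for m
  proof -
    obtain z where "Im (- \<i> * of_real (\<rho> m)) - of_int z * (2 * pi) = Arg (exp (- \<i> * of_real (\<rho> m)))"
      using Arg_exp_diff_2pi by blast
    then show ?thesis unfolding theta_def detblock by (intro exI[of _ z]) simp
  qed
  then obtain zz where zz: "\<And>m. theta n (V T) m = - \<rho> m - of_int (zz m) * (2*pi)" by metis
  have pw: "(\<Sum>m\<le>k. (-1)^m * real((n-m) choose (k-m)) * (\<Sum>x\<in>weight_space n m. r x s)) = 2^k * (\<Sum>S\<in>KS. a S s)"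
    if s: "s\<in>{0..T}" for s
  proof -
    let ?A = "\<lambda>K. {x. x < 2^n \<and> bs n x \<subseteq> K}"
    have part1: "(\<Sum>x\<in>?A K. (-1)^card (bs n x) * Re (Hk1 s $$ (x,x))) = 0" if K: "K \<in> KS" for K
    proof -
      obtain ts :: "(nat set \<times> complex mat) list" where
        ts: "\<forall>(S,B) \<in> set ts. card S \<le> k - 1 \<and> acts_on n S B"
        and tsum: "\<forall>x < ?N. \<forall>y < ?N. Hk1 s $$ (x,y) = (\<Sum>p \<leftarrow> ts. snd p $$ (x,y))"
        using Hk1_local s unfolding k_local_def by blast
      have "(\<Sum>x\<in>?A K. (-1)^card (bs n x) * Hk1 s $$ (x,x)) =
            (\<Sum>x\<in>?A K. (\<Sum>p \<leftarrow> ts. (-1)^card (bs n x) * snd p $$ (x,x)))"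
        using tsum by (intro sum.cong) (auto simp: dimH_def sum_list_const_mult)
      also have "\<dots> = (\<Sum>p \<leftarrow> ts. \<Sum>x\<in>?A K. (-1)^card (bs n x) * snd p $$ (x,x))"
        by (rule sum_sum_list_swap)
      also have "\<dots> = 0"
      proof (rule sum_list_zero)
        fix p assume "p \<in> set ts"
        then obtain S B where p: "p = (S,B)" "card S \<le> k - 1" "acts_on n S B" using ts by (cases p) auto
        have "card S < k" using p(2) \<open>1 \<le> k\<close> by simp
        then show "(\<Sum>x\<in>?A K. (-1)^card (bs n x) * snd p $$ (x,x)) = 0"
          using local_zero[OF p(3), of k K] K p(1) unfolding KS_def by simp
      qed
      finally have z: "(\<Sum>x\<in>?A K. (-1)^card (bs n x) * Hk1 s $$ (x,x)) = 0" .
      have "(\<Sum>x\<in>?A K. (-1)^card (bs n x) * Re (Hk1 s $$ (x,x))) = Re (\<Sum>x\<in>?A K. (-1)^card (bs n x) * Hk1 s $$ (x,x))"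
        by (simp add: Re_sum)
      then show ?thesis using z by simp
    qed
    have part2: "(\<Sum>x\<in>?A K. (-1)^card (bs n x) * (\<Sum>S\<in>KS. a S s * zs S x)) =
        (\<Sum>S\<in>KS. a S s * (if K = S then 2^k else 0))" if K: "K \<in> KS" for K
    proof -
      have "(\<Sum>x\<in>?A K. (-1)^card (bs n x) * (\<Sum>S\<in>KS. a S s * zs S x)) =
          (\<Sum>S\<in>KS. a S s * (\<Sum>x\<in>?A K. (-1)^card (bs n x) * zs S x))"
        by (simp add: sum_distrib_left sum_distrib_right sum.swap[of _ "?A K"] mult_ac)
      also have "\<dots> = (\<Sum>S\<in>KS. a S s * (if K = S then 2^k else 0))"
        by (intro sum.cong refl arg_cong[where f="\<lambda>z. a _ s * z"] zs_sum) (use K in \<open>auto simp: KS_def\<close>)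
      finally show ?thesis .
    qed
    have "(\<Sum>m\<le>k. (-1)^m * real((n-m) choose (k-m)) * (\<Sum>x\<in>weight_space n m. r x s)) =
       (\<Sum>K\<in>KS. \<Sum>x\<in>?A K. (-1)^card (bs n x) * r x s)"
      unfolding KS_def by (rule regroup)
    also have "\<dots> = (\<Sum>K\<in>KS. (\<Sum>x\<in>?A K. (-1)^card (bs n x) * Re (Hk1 s $$ (x,x)))
         + (\<Sum>x\<in>?A K. (-1)^card (bs n x) * (\<Sum>S\<in>KS. a S s * zs S x)))"
      unfolding r_def by (simp add: distrib_left sum.distrib)
    also have "\<dots> = (\<Sum>K\<in>KS. \<Sum>S\<in>KS. a S s * (if K = S then 2^k else 0))"
      using part1 part2 by simp
    also have "\<dots> = (\<Sum>S\<in>KS. a S s * (\<Sum>K\<in>KS. if K = S then 2^k else 0))"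
      by (subst sum.swap) (simp add: sum_distrib_left)
    also have "\<dots> = (\<Sum>S\<in>KS. a S s * 2^k)"
      using fKS by (intro sum.cong refl) (simp add: sum.delta')
    finally show ?thesis by (simp add: sum_distrib_left mult_ac)
  qed
  have wsint: "(\<lambda>s. \<Sum>x\<in>weight_space n m. r x s) integrable_on {0..T}" for m
    by (intro integrable_sum rint) (auto simp: weight_space_def)
  have sumrho: "(\<Sum>m\<le>k. (-1)^m * real((n-m) choose (k-m)) * \<rho> m) = 2^k * integral {0..T} (\<lambda>t. \<Sum>S\<in>KS. a S t)"
  proof -
    have "(\<Sum>m\<le>k. (-1)^m * real((n-m) choose (k-m)) * \<rho> m) =
        (\<Sum>m\<le>k. integral {0..T} (\<lambda>s. (-1)^m * real((n-m) choose (k-m)) * (\<Sum>x\<in>weight_space n m. r x s)))"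
      unfolding \<rho>_def by simp
    also have "\<dots> = integral {0..T} (\<lambda>s. \<Sum>m\<le>k. (-1)^m * real((n-m) choose (k-m)) * (\<Sum>x\<in>weight_space n m. r x s))"
      by (rule integral_sum[symmetric]) (auto intro: integrable_on_mult_right wsint)
    also have "\<dots> = integral {0..T} (\<lambda>s. 2^k * (\<Sum>S\<in>KS. a S s))"
      by (rule integral_cong) (rule pw)
    also have "\<dots> = 2^k * integral {0..T} (\<lambda>t. \<Sum>S\<in>KS. a S t)" by simp
    finally show ?thesis .
  qed
  have "beta n (V T) k = - (\<Sum>m\<le>k. (-1)^m * real((n-m) choose (k-m)) * \<rho> m)
      - 2 * pi * of_int (\<Sum>m\<le>k. (-1)^m * int((n-m) choose (k-m)) * zz m)"
    unfolding beta_def zz by (simp add: algebra_simps sum_negf sum_subtractf sum_distrib_left)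
  then show ?thesis unfolding cong_2pi_def sumrho KS_def[symmetric]
    by (intro exI[of _ "- (\<Sum>m\<le>k. (-1)^m * int((n-m) choose (k-m)) * zz m)"]) (simp add: algebra_simps)
qed


end
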